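(* Let $\Omega\subset\mathbb{R}^n$ be a bounded open set with Lipschitz boundary. Let $E\subset\mathbb{R}^n$ be such that $\partial^-E\cap\Omega\neq\emptyset$ and $\overline{\mathrm{Dim}}_{\mathcal M}(\partial^-E,\Omega)\in[n-1,n)$. Then \[ P_s(E,\Omega)<\infty\qquad\text{for every } s\in\big(0,\,n-\overline{\mathrm{Dim}}_{\mathcal M}(\partial^-E,\Omega)\big). \]
   Context: $\mathcal L_s(A,B):=\int_A\int_B|x-y|^{-n-s}dx\,dy$; $P_s(E,\Omega):=\mathcal L_s(E\cap\Omega,E^c\cap\Omega)+\mathcal L_s(E\cap\Omega,E^c\setminus\Omega)+\mathcal L_s(E\setminus\Omega,E^c\cap\Omega)$. $\partial^-E:=\{x: 0<|E\cap B_r(x)|<\omega_nr^n\ \forall r>0\}$. For $\Gamma\subset\mathbb{R}^n$ and $\rho>0$, $\bar N^\Omega_\rho(\Gamma):=\{x\in\Omega: d(x,\Gamma)\leq\rho\}$; for $r\in[0,n]$, $\overline{\mathcal M}^r(\Gamma,\Omega):=\limsup_{\rho\to0}|\bar N^\Omega_\rho(\Gamma)|/\rho^{n-r}$, and the upper Minkowski dimension of $\Gamma$ in $\Omega$ is $\overline{\mathrm{Dim}}_{\mathcal M}(\Gamma,\Omega):=\sup\{r\in[0,n]:\overline{\mathcal M}^r(\Gamma,\Omega)=\infty\}$. *)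

theory Defs
  imports "HOL-Analysis.Analysis"
begin

text \<open>Dimension n = DIM('a); the ambient space R^n is an abstract euclidean_space 'a.\<close>

definition Ls :: "real \<Rightarrow> 'a::euclidean_space set \<Rightarrow> 'a set \<Rightarrow> ennreal" where
  "Ls s A B = (\<integral>\<^sup>+ x. (\<integral>\<^sup>+ y. ennreal (norm (x - y) powr (- (real DIM('a) + s)))
                  * indicator B y \<partial>lebesgue) * indicator A x \<partial>lebesgue)"

definition Ps :: "real \<Rightarrow> 'a::euclidean_space set \<Rightarrow> 'a set \<Rightarrow> ennreal" where
  "Ps s E \<Omega> = Ls s (E \<inter> \<Omega>) ((- E) \<inter> \<Omega>) + Ls s (E \<inter> \<Omega>) ((- E) - \<Omega>)
              + Ls s (E - \<Omega>) ((- E) \<inter> \<Omega>)"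

definition meas_boundary :: "'a::euclidean_space set \<Rightarrow> 'a set" where
  "meas_boundary E = {x. \<forall>r>0. 0 < emeasure lebesgue (E \<inter> ball x r)
                               \<and> emeasure lebesgue (E \<inter> ball x r) < emeasure lebesgue (ball x r)}"

definition nbhd_in :: "'a::euclidean_space set \<Rightarrow> 'a set \<Rightarrow> real \<Rightarrow> 'a set" where
  "nbhd_in \<Gamma> \<Omega> \<rho> = {x \<in> \<Omega>. infdist x \<Gamma> \<le> \<rho>}"

definition upper_mink_content :: "real \<Rightarrow> 'a::euclidean_space set \<Rightarrow> 'a set \<Rightarrow> ereal" where
  "upper_mink_content r \<Gamma> \<Omega> =
     Limsup (at_right 0) (\<lambda>\<rho>. ereal (measure lebesgue (nbhd_in \<Gamma> \<Omega> \<rho>) / \<rho> powr (real DIM('a) - r)))"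

text \<open>Upper Minkowski dimension (sup over an empty set is -infinity).\<close>
definition upper_mink_dim :: "'a::euclidean_space set \<Rightarrow> 'a set \<Rightarrow> ereal" where
  "upper_mink_dim \<Gamma> \<Omega> =
     Sup (ereal ` {r \<in> {0..real DIM('a)}. upper_mink_content r \<Gamma> \<Omega> = \<infinity>})"

text \<open>Lipschitz boundary: near each boundary point, Omega is (in suitable rotated coordinates)
  the strict supergraph of a Lipschitz function. The rotation is encoded by a unit vector e
  (the n-th axis) and the orthogonal hyperplane {z. z \<bullet> e = 0} (the first n-1 coordinates).\<close>
definition lipschitz_boundary :: "'a::euclidean_space set \<Rightarrow> bool" where
  "lipschitz_boundary \<Omega> \<longleftrightarrow>
     (\<forall>x \<in> frontier \<Omega>. \<exists>r>0. \<exists>e::'a. \<exists>\<gamma>::'a \<Rightarrow> real. \<exists>L.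
        norm e = 1 \<and> L-lipschitz_on {z. z \<bullet> e = 0} \<gamma> \<and>
        \<Omega> \<inter> ball x r = {y \<in> ball x r. y \<bullet> e > \<gamma> (y - (y \<bullet> e) *\<^sub>R e)})"

end

theory Submission
  imports Defs
begin

lemma pow2_bracket:
  fixes t :: real assumes "1 \<le> t" shows "\<exists>k::nat. 2^k \<le> t \<and> t < 2^(Suc k)"
proof -
  obtain m::nat where m: "t < 2^m" using real_arch_pow[of 2 t] by auto
  have "\<forall>t::real. 1 \<le> t \<longrightarrow> t < 2^m \<longrightarrow> (\<exists>k::nat. 2^k \<le> t \<and> t < 2^(Suc k))"
  proof (induction m)
    case 0 then show ?case by auto
  next
    case (Suc m)
    show ?case
    proof (intro allI impI)
      fix t :: real assume t: "1 \<le> t" "t < 2^Suc m"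
      show "\<exists>k::nat. 2^k \<le> t \<and> t < 2^(Suc k)"
      proof (cases "t < 2^m")
        case True then show ?thesis using Suc.IH t by blast
      next
        case False then show ?thesis using t by (intro exI[of _ m]) auto
      qed
    qed
  qed
  then show ?thesis using assms m by blast
qed

lemma ball_sets_lebesgue[measurable]: "ball (x::'a::euclidean_space) r \<in> sets lebesgue"
  using fmeasurableD[OF lmeasurable_ball] .

lemma ball_emeasure:
  fixes x :: "'a::euclidean_space" assumes "0 \<le> R"
  shows "emeasure lebesgue (ball x R) = ennreal (R ^ DIM('a) * measure lebesgue (ball (0::'a) 1))"
  using emeasure_lebesgue_ball_conv_unit_ball[OF assms, of x]
    emeasure_lborel_ball_finite[of "0::'a" 1] assms
  by (subst (asm) emeasure_eq_ennreal_measure) (auto simp: ennreal_mult')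

lemma geom_ennreal:
  fixes q K :: real assumes "0 \<le> q" "q < 1" "0 \<le> K"
  shows "(\<Sum>j. ennreal (K * q ^ j)) = ennreal (K / (1 - q))"
proof -
  have s: "summable (\<lambda>j. K * q ^ j)" using assms by (intro summable_mult summable_geometric) auto
  have "(\<Sum>j. ennreal (K * q ^ j)) = ennreal (\<Sum>j. K * q ^ j)"
    using assms s by (intro suminf_ennreal2) auto
  also have "(\<Sum>j. K * q ^ j) = K / (1 - q)"
    using assms by (simp add: suminf_mult suminf_geometric divide_simps)
  finally show ?thesis .
qed

lemma powr_identity:
  fixes \<delta> s n :: real and j :: nat and N :: nat
  assumes "0 < \<delta>" "n = real N"
  shows "(2^j * \<delta>) powr (-(n + s)) * (2^(Suc j) * \<delta>) ^ N = 2^N * \<delta> powr (-s) * (2 powr (-s)) ^ j"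
proof -
  have p: "0 < 2^j * \<delta>" using assms by auto
  have "(2^(Suc j) * \<delta>) ^ N = 2^N * (2^j * \<delta>) powr n"
    using p assms by (simp add: powr_realpow power_mult_distrib)
  moreover have "(2^j * \<delta>) powr (-(n + s)) * (2^j * \<delta>) powr n = (2^j * \<delta>) powr (-s)"
    using p by (simp add: powr_add[symmetric])
  moreover have "(2^j * \<delta>) powr (-s) = (2 powr (-s))^j * \<delta> powr (-s)"
    using assms by (simp add: powr_mult powr_realpow[symmetric] powr_powr powr_power mult.commute)
  ultimately show ?thesis by (metis (no_types, lifting) mult.assoc mult.commute)
qed

definition kconst :: "'a::euclidean_space itself \<Rightarrow> real \<Rightarrow> real" where
  "kconst T s = 2^DIM('a) * measure lebesgue (ball (0::'a) 1) / (1 - 2 powr (-s))"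

lemma kernel_bound:
  fixes x :: "'a::euclidean_space"
  assumes s: "0 < s" and d: "0 < \<delta>" and A: "AE y in lebesgue. y \<in> A \<longrightarrow> \<delta> \<le> dist x y"
  shows "(\<integral>\<^sup>+ y. ennreal (norm (x - y) powr (- (real DIM('a) + s))) * indicator A y \<partial>lebesgue)
         \<le> ennreal (kconst TYPE('a) s * \<delta> powr (-s))"
proof -
  let ?n = "real DIM('a)"
  define v where "v = measure lebesgue (ball (0::'a) 1)"
  define c where "c j = (2^j * \<delta>) powr (- (?n + s))" for j :: nat
  define R where "R j = 2^(Suc j) * \<delta>" for j :: nat
  have v0: "0 \<le> v" unfolding v_def by simp
  have "AE y in lebesgue. ennreal (norm (x - y) powr (- (?n + s))) * indicator A y
        \<le> (\<Sum>j. ennreal (c j) * indicator (ball x (R j)) y)"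
    using A
  proof eventually_elim
    case (elim y)
    show ?case
    proof (cases "y \<in> A")
      case False then show ?thesis by simp
    next
      case True
      then have dy: "\<delta> \<le> dist x y" using elim by auto
      then have "1 \<le> dist x y / \<delta>" using d by simp
      then obtain k::nat where k: "2^k \<le> dist x y / \<delta>" "dist x y / \<delta> < 2^Suc k"
        using pow2_bracket by blast
      have k1: "2^k * \<delta> \<le> dist x y" using k(1) d by (simp add: field_simps)
      have k2: "dist x y < R k" using k(2) d by (simp add: field_simps R_def)
      have "norm (x - y) powr (- (?n + s)) \<le> c k"
        unfolding c_def dist_norm[symmetric]
        using k1 d s by (intro powr_mono2') auto
      then have "ennreal (norm (x - y) powr (- (?n + s))) * indicator A y
            \<le> ennreal (c k) * indicator (ball x (R k)) y"
        using True k2 by (auto simp: indicator_def intro!: ennreal_leI)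
      also have "\<dots> \<le> (\<Sum>j. ennreal (c j) * indicator (ball x (R j)) y)"
        using sum_le_suminf[OF summableI, of "{k}" "\<lambda>j. ennreal (c j) * indicator (ball x (R j)) y"] by (simp only: sum.insert finite.emptyI empty_iff not_False_eq_True sum.empty add_0_right finite_insert zero_le simp_thms)
      finally show ?thesis .
    qed
  qed
  then have "(\<integral>\<^sup>+ y. ennreal (norm (x - y) powr (- (?n + s))) * indicator A y \<partial>lebesgue)
      \<le> (\<integral>\<^sup>+ y. (\<Sum>j. ennreal (c j) * indicator (ball x (R j)) y) \<partial>lebesgue)"
    by (rule nn_integral_mono_AE)
  also have "\<dots> = (\<Sum>j. \<integral>\<^sup>+ y. ennreal (c j) * indicator (ball x (R j)) y \<partial>lebesgue)"
    by (rule nn_integral_suminf) measurable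
  also have "\<dots> = (\<Sum>j. ennreal (c j) * emeasure lebesgue (ball x (R j)))"
    by (simp add: nn_integral_cmult_indicator)
  also have "\<dots> = (\<Sum>j. ennreal ((v * 2^DIM('a) * \<delta> powr (-s)) * (2 powr (-s))^j))"
  proof (rule suminf_cong)
    fix j
    have "R j \<ge> 0" using d by (simp add: R_def)
    then have "ennreal (c j) * emeasure lebesgue (ball x (R j)) = ennreal (c j * (R j ^ DIM('a) * v))"
    proof -
      have e: "emeasure lebesgue (ball x (R j)) = ennreal (R j ^ DIM('a) * v)"
        using ball_emeasure[OF \<open>R j \<ge> 0\<close>, of x] unfolding v_def .
      have "0 \<le> c j" by (simp add: c_def)
      moreover have "0 \<le> R j ^ DIM('a) * v" using \<open>R j \<ge> 0\<close> v0 by simp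
      ultimately show ?thesis by (simp only: e ennreal_mult)
    qed
    also have "c j * (R j ^ DIM('a) * v) = (v * 2^DIM('a) * \<delta> powr (-s)) * (2 powr (-s))^j"
      using powr_identity[OF d, of ?n "DIM('a)" j s] by (simp add: c_def R_def algebra_simps)
    finally show "ennreal (c j) * emeasure lebesgue (ball x (R j)) = ennreal ((v * 2^DIM('a) * \<delta> powr (-s)) * (2 powr (-s))^j)" .
  qed
  also have "\<dots> = ennreal ((v * 2^DIM('a) * \<delta> powr (-s)) / (1 - 2 powr (-s)))"
    using s v0 by (intro geom_ennreal) (auto intro: powr_less_one)
  also have "(v * 2^DIM('a) * \<delta> powr (-s)) / (1 - 2 powr (-s)) = kconst TYPE('a) s * \<delta> powr (-s)"
    by (simp add: kconst_def v_def)
  finally show ?thesis .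
qed

lemma nbhd_sets[measurable]:
  fixes \<Omega> \<Gamma> :: "'a::euclidean_space set"
  assumes "open \<Omega>" shows "nbhd_in \<Gamma> \<Omega> \<rho> \<in> sets lebesgue"
proof -
  have "closed {x::'a. infdist x \<Gamma> \<le> \<rho>}"
    by (intro closed_Collect_le continuous_intros)
  then have "\<Omega> \<inter> {x. infdist x \<Gamma> \<le> \<rho>} \<in> sets borel"
    using assms by (intro sets.Int borel_open borel_closed) auto
  moreover have "nbhd_in \<Gamma> \<Omega> \<rho> = \<Omega> \<inter> {x. infdist x \<Gamma> \<le> \<rho>}"
    by (auto simp: nbhd_in_def)
  ultimately show ?thesis by (simp add: sets_completionI_sets)
qed

lemma open_sets_lebesgue[measurable]: "open (S::'a::euclidean_space set) \<Longrightarrow> S \<in> sets lebesgue"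
  by (simp add: borel_open sets_completionI_sets)

lemma layer_powr_identity:
  fixes r a s :: real and k :: nat assumes "0 < r"
  shows "(r / 2^Suc k) powr (-s) * (r / 2^k) powr a = r powr (a - s) * 2 powr s * (2 powr (s - a)) ^ k"
proof -
  have e1: "(2::real)^Suc k = 2 powr real (Suc k)" by (metis powr_realpow zero_less_numeral)
  have e2: "(2::real)^k = 2 powr real k" by (rule powr_realpow[symmetric]) simp
  have "(r / 2 powr real (Suc k)) powr (-s) = r powr (-s) / (2 powr real (Suc k)) powr (-s)"
    using assms by (intro powr_divide; auto)
  also have "\<dots> = r powr (-s) / 2 powr (real (Suc k) * (-s))" by (simp only: powr_powr)
  finally have a1: "(r / 2^Suc k) powr (-s) = r powr (-s) / 2 powr (real (Suc k) * (-s))" by (simp only: e1)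
  have "(r / 2 powr real k) powr a = r powr a / (2 powr real k) powr a"
    using assms by (intro powr_divide; auto)
  also have "\<dots> = r powr a / 2 powr (real k * a)" by (simp only: powr_powr)
  finally have a2: "(r / 2^k) powr a = r powr a / 2 powr (real k * a)" by (simp only: e2)
  have a3: "(2 powr (s - a)) ^ k = 2 powr (real k * (s - a))"
    by (simp add: powr_power[symmetric] mult.commute)
  have x: "-(real (Suc k) * -s) + -(real k*a) = s + real k * (s - a)" by (simp add: algebra_simps)
  have y: "-s + a = a - s" by simp
  have "(r / 2^Suc k) powr (-s) * (r / 2^k) powr a = r powr (-s) / 2 powr (real (Suc k) * (-s)) * (r powr a / 2 powr (real k * a))"
    by (simp only: a1 a2)
  also have "\<dots> = (r powr (-s) * r powr a) * (2 powr (- (real (Suc k) * (-s))) * 2 powr (- (real k * a)))"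
    by (simp add: powr_minus divide_inverse)
  also have "\<dots> = r powr (a - s) * (2 powr s * 2 powr (real k * (s - a)))"
    by (simp only: powr_add[symmetric] x y)
  also have "\<dots> = r powr (a - s) * 2 powr s * (2 powr (s - a)) ^ k"
    by (simp only: a3 mult.assoc)
  finally show ?thesis .
qed

lemma layer_bound:
  fixes \<Omega> \<Gamma> :: "'a::euclidean_space set"
  assumes \<Omega>: "open \<Omega>" "bounded \<Omega>" and s: "0 < s" "s < a" and rr: "0 < rr"
    and K: "0 \<le> K" and C: "0 \<le> C"
    and M: "\<And>\<rho>. 0 < \<rho> \<Longrightarrow> \<rho> \<le> rr \<Longrightarrow> emeasure lebesgue (nbhd_in \<Gamma> \<Omega> \<rho>) \<le> ennreal (C * \<rho> powr a)"
  shows "(\<integral>\<^sup>+x. ennreal (K * infdist x \<Gamma> powr (-s)) * indicator \<Omega> x \<partial>lebesgue) < \<infinity>"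
proof -
  define c where "c k = K * (rr / 2^Suc k) powr (-s)" for k :: nat
  define N where "N k = nbhd_in \<Gamma> \<Omega> (rr / 2^k)" for k :: nat
  have pw: "ennreal (K * infdist x \<Gamma> powr (-s)) * indicator \<Omega> x
      \<le> ennreal (K * rr powr (-s)) * indicator \<Omega> x + (\<Sum>k. ennreal (c k) * indicator (N k) x)" for x
  proof (cases "x \<in> \<Omega>")
    case False then show ?thesis by simp
  next
    case True
    define d where "d = infdist x \<Gamma>"
    have d0: "0 \<le> d" by (simp add: d_def infdist_nonneg)
    consider "d = 0" | "rr \<le> d" | "0 < d" "d < rr" using d0 by linarith
    then show ?thesis
    proof cases
      case 1 then show ?thesis by (simp add: d_def[symmetric])
    next
      case 2
      have "d powr (-s) \<le> rr powr (-s)" using 2 rr s by (intro powr_mono2') auto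
      then have "K * d powr (-s) \<le> K * rr powr (-s)" using K by (rule mult_left_mono)
      then have "ennreal (K * infdist x \<Gamma> powr (-s)) * indicator \<Omega> x \<le> ennreal (K * rr powr (-s)) * indicator \<Omega> x"
        using True by (simp add: d_def ennreal_leI)
      also have "\<dots> \<le> ennreal (K * rr powr (-s)) * indicator \<Omega> x + (\<Sum>k. ennreal (c k) * indicator (N k) x)"
        by (rule add_increasing2[OF zero_le order_refl])
      finally show ?thesis .
    next
      case 3
      then have "1 \<le> rr / d" by simp
      then obtain k::nat where k: "2^k \<le> rr / d" "rr / d < 2^Suc k" using pow2_bracket by blast
      have k1: "d \<le> rr / 2^k" using k(1) 3 by (simp add: field_simps)
      have k2: "rr / 2^Suc k < d" using k(2) 3 by (simp add: field_simps)
      have xN: "x \<in> N k" using k1 True by (simp add: N_def nbhd_in_def d_def)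
      have "d powr (-s) \<le> (rr / 2^Suc k) powr (-s)" using k2 rr s by (intro powr_mono2') auto
      then have "K * d powr (-s) \<le> c k" unfolding c_def using K by (rule mult_left_mono)
      then have "ennreal (K * infdist x \<Gamma> powr (-s)) * indicator \<Omega> x \<le> ennreal (c k) * indicator (N k) x"
        using True xN by (simp add: d_def ennreal_leI)
      also have "\<dots> \<le> (\<Sum>k. ennreal (c k) * indicator (N k) x)"
        using sum_le_suminf[OF summableI, of "{k}" "\<lambda>k. ennreal (c k) * indicator (N k) x"]
        by (simp only: sum.insert finite.emptyI empty_iff not_False_eq_True sum.empty add_0_right finite_insert zero_le simp_thms)
      also have "\<dots> \<le> ennreal (K * rr powr (-s)) * indicator \<Omega> x + (\<Sum>k. ennreal (c k) * indicator (N k) x)"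
        by (rule add_increasing[OF zero_le order_refl])
      finally show ?thesis .
    qed
  qed
  have Nm: "N k \<in> sets lebesgue" for k unfolding N_def using \<Omega> by measurable
  have Om: "\<Omega> \<in> sets lebesgue" using \<Omega> by measurable
  define B where "B = ennreal ((K * C * rr powr (a - s) * 2 powr s) / (1 - 2 powr (s - a)))"
  have S: "(\<integral>\<^sup>+x. (\<Sum>k. ennreal (c k) * indicator (N k) x) \<partial>lebesgue) \<le> B"
  proof -
    have "(\<integral>\<^sup>+x. (\<Sum>k. ennreal (c k) * indicator (N k) x) \<partial>lebesgue)
           = (\<Sum>k. \<integral>\<^sup>+x. ennreal (c k) * indicator (N k) x \<partial>lebesgue)"
      by (intro nn_integral_suminf borel_measurable_times_ennreal borel_measurable_const borel_measurable_indicator Nm)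
    also have "\<dots> = (\<Sum>k. ennreal (c k) * emeasure lebesgue (N k))"
      using Nm by (simp add: nn_integral_cmult_indicator)
    also have "\<dots> \<le> (\<Sum>k. ennreal ((K * C * rr powr (a - s) * 2 powr s) * (2 powr (s - a)) ^ k))"
    proof (intro suminf_le summableI)
      fix k
      have "emeasure lebesgue (N k) \<le> ennreal (C * (rr / 2^k) powr a)"
        unfolding N_def using rr by (intro M) (auto simp: field_simps)
      then have "ennreal (c k) * emeasure lebesgue (N k) \<le> ennreal (c k) * ennreal (C * (rr / 2^k) powr a)"
        by (rule mult_left_mono) auto
      also have "\<dots> = ennreal (c k * (C * (rr / 2^k) powr a))"
        using K C by (simp add: c_def ennreal_mult)
      also have "c k * (C * (rr / 2^k) powr a) = (K * C * rr powr (a - s) * 2 powr s) * (2 powr (s - a)) ^ k"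
        using layer_powr_identity[OF rr, of k s a] by (simp add: c_def mult_ac)
      finally show "ennreal (c k) * emeasure lebesgue (N k) \<le> ennreal ((K * C * rr powr (a - s) * 2 powr s) * (2 powr (s - a)) ^ k)" .
    qed
    also have "\<dots> = B"
      unfolding B_def using s K C by (intro geom_ennreal) (auto intro: powr_less_one)
    finally show ?thesis .
  qed
  have "(\<integral>\<^sup>+x. ennreal (K * infdist x \<Gamma> powr (-s)) * indicator \<Omega> x \<partial>lebesgue)
     \<le> (\<integral>\<^sup>+x. ennreal (K * rr powr (-s)) * indicator \<Omega> x + (\<Sum>k. ennreal (c k) * indicator (N k) x) \<partial>lebesgue)"
    by (intro nn_integral_mono pw)
  also have "\<dots> = (\<integral>\<^sup>+x. ennreal (K * rr powr (-s)) * indicator \<Omega> x \<partial>lebesgue)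
                 + (\<integral>\<^sup>+x. (\<Sum>k. ennreal (c k) * indicator (N k) x) \<partial>lebesgue)"
    by (intro nn_integral_add borel_measurable_times_ennreal borel_measurable_const borel_measurable_indicator Om borel_measurable_suminf_order Nm)
  also have "\<dots> \<le> (\<integral>\<^sup>+x. ennreal (K * rr powr (-s)) * indicator \<Omega> x \<partial>lebesgue) + B"
    using S by (rule add_left_mono)
  finally have I: "(\<integral>\<^sup>+x. ennreal (K * infdist x \<Gamma> powr (-s)) * indicator \<Omega> x \<partial>lebesgue)
      \<le> (\<integral>\<^sup>+x. ennreal (K * rr powr (-s)) * indicator \<Omega> x \<partial>lebesgue) + B" .
  have "(\<integral>\<^sup>+x. ennreal (K * rr powr (-s)) * indicator \<Omega> x \<partial>lebesgue) = ennreal (K * rr powr (-s)) * emeasure lebesgue \<Omega>"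
    using Om by (simp add: nn_integral_cmult_indicator)
  also have "\<dots> < \<infinity>"
    using \<Omega> emeasure_bounded_finite[of \<Omega>] by (simp add: ennreal_mult_less_top)
  finally have "(\<integral>\<^sup>+x. ennreal (K * rr powr (-s)) * indicator \<Omega> x \<partial>lebesgue) + B < \<infinity>"
    by (simp add: B_def)
  then show ?thesis using I by (rule le_less_trans[rotated])
qed

lemma locally_null:
  fixes A S :: "'a::euclidean_space set"
  assumes A: "A \<in> sets lebesgue" and S: "open S"
    and loc: "\<And>z. z \<in> S \<Longrightarrow> \<exists>r>0. A \<inter> ball z r \<in> null_sets lebesgue"
  shows "A \<inter> S \<in> null_sets lebesgue"
proof -
  define F where "F = {ball z r | z r. r > 0 \<and> A \<inter> ball z r \<in> null_sets lebesgue}"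
  have "\<And>T. T \<in> F \<Longrightarrow> open T" by (auto simp: F_def)
  then obtain F' where F': "F' \<subseteq> F" "countable F'" "\<Union>F' = \<Union>F" by (rule Lindelof)
  have "(\<Union>T\<in>F'. A \<inter> T) \<in> null_sets lebesgue"
    using F' by (intro null_sets_UN') (auto simp: F_def)
  moreover have "A \<inter> S \<subseteq> (\<Union>T\<in>F'. A \<inter> T)"
  proof
    fix x assume x: "x \<in> A \<inter> S"
    then obtain r where "r > 0" "A \<inter> ball x r \<in> null_sets lebesgue" using loc by blast
    then have "x \<in> \<Union>F" unfolding F_def by force
    then show "x \<in> (\<Union>T\<in>F'. A \<inter> T)" using x F'(3) by blast
  qed
  moreover have "A \<inter> S \<in> sets lebesgue" using A S by measurable
  ultimately show ?thesis by (blast intro: null_sets_subset)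
qed

lemma ball_pos: "0 < r \<Longrightarrow> 0 < emeasure lebesgue (ball (x::'a::euclidean_space) r)"
proof -
  assume r: "0 < r"
  have "emeasure lebesgue (ball x r) \<noteq> top" using emeasure_lborel_ball_finite[of x r] by simp
  then have "emeasure lebesgue (ball x r) = ennreal (measure lebesgue (ball x r))"
    by (rule emeasure_eq_ennreal_measure)
  moreover have "0 < measure lebesgue (ball x r)" using content_ball_pos[OF r, of x] by simp
  ultimately show ?thesis by simp
qed

lemma ball_dichotomy:
  fixes E :: "'a::euclidean_space set"
  assumes E: "E \<in> sets lebesgue" and d: "0 < d" and disj: "ball x d \<inter> meas_boundary E = {}"
    and notV: "\<And>r. r > 0 \<Longrightarrow> emeasure lebesgue (E \<inter> ball x r) \<noteq> 0"
  shows "ball x d - E \<in> null_sets lebesgue"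
proof -
  define U0 where "U0 = {z. \<exists>r>0. emeasure lebesgue (E \<inter> ball z r) = 0}"
  define U1 where "U1 = {z. \<exists>r>0. emeasure lebesgue (ball z r - E) = 0}"
  have "U0 = \<Union>{ball z r | z r. r > 0 \<and> emeasure lebesgue (E \<inter> ball z r) = 0}"
  proof (intro equalityI subsetI)
    fix w assume "w \<in> U0"
    then obtain r where "r > 0" "emeasure lebesgue (E \<inter> ball w r) = 0" unfolding U0_def by blast
    then show "w \<in> \<Union>{ball z r | z r. r > 0 \<and> emeasure lebesgue (E \<inter> ball z r) = 0}"
      by (intro UnionI[of "ball w r"]) auto
  next
    fix w assume "w \<in> \<Union>{ball z r | z r. r > 0 \<and> emeasure lebesgue (E \<inter> ball z r) = 0}"
    then obtain z r where zr: "r > 0" "emeasure lebesgue (E \<inter> ball z r) = 0" "w \<in> ball z r" by auto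
    have "ball w (r - dist z w) \<subseteq> ball z r" by (simp add: ball_subset_ball_iff dist_commute)
    then have "emeasure lebesgue (E \<inter> ball w (r - dist z w)) \<le> emeasure lebesgue (E \<inter> ball z r)"
      using E by (intro emeasure_mono) auto
    then show "w \<in> U0" unfolding U0_def using zr by (intro CollectI exI[of _ "r - dist z w"]) auto
  qed
  then have oU0: "open U0" by (simp only:) (intro open_Union, auto)
  have "U1 = \<Union>{ball z r | z r. r > 0 \<and> emeasure lebesgue (ball z r - E) = 0}"
  proof (intro equalityI subsetI)
    fix w assume "w \<in> U1"
    then obtain r where "r > 0" "emeasure lebesgue (ball w r - E) = 0" unfolding U1_def by blast
    then show "w \<in> \<Union>{ball z r | z r. r > 0 \<and> emeasure lebesgue (ball z r - E) = 0}"
      by (intro UnionI[of "ball w r"]) auto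
  next
    fix w assume "w \<in> \<Union>{ball z r | z r. r > 0 \<and> emeasure lebesgue (ball z r - E) = 0}"
    then obtain z r where zr: "r > 0" "emeasure lebesgue (ball z r - E) = 0" "w \<in> ball z r" by auto
    have "ball w (r - dist z w) \<subseteq> ball z r" by (simp add: ball_subset_ball_iff dist_commute)
    then have "emeasure lebesgue (ball w (r - dist z w) - E) \<le> emeasure lebesgue (ball z r - E)"
      using E by (intro emeasure_mono) auto
    then show "w \<in> U1" unfolding U1_def using zr by (intro CollectI exI[of _ "r - dist z w"]) auto
  qed
  then have oU1: "open U1" by (simp only:) (intro open_Union, auto)
  have cover: "ball x d \<subseteq> U0 \<union> U1"
  proof
    fix z assume z: "z \<in> ball x d"
    then have "z \<notin> meas_boundary E" using disj by auto
    then obtain r where r: "r > 0" "\<not> (0 < emeasure lebesgue (E \<inter> ball z r)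
         \<and> emeasure lebesgue (E \<inter> ball z r) < emeasure lebesgue (ball z r))"
      unfolding meas_boundary_def by auto
    show "z \<in> U0 \<union> U1"
    proof (cases "emeasure lebesgue (E \<inter> ball z r) = 0")
      case True then have "z \<in> U0" unfolding U0_def using r(1) by blast
      then show ?thesis by blast
    next
      case False
      let ?m = "emeasure lebesgue (E \<inter> ball z r)" and ?M = "emeasure lebesgue (ball z r)"
      have "0 < ?m" using False by (simp add: zero_less_iff_neq_zero)
      then have "\<not> ?m < ?M" using r(2) by blast
      then have ge: "?M \<le> ?m" by (simp add: not_less)
      have Mfin: "?M < top" using emeasure_lborel_ball_finite[of z r] by simp
      have mle: "?m \<le> ?M" by (rule emeasure_mono) auto
      then have mfin: "?m \<noteq> top" using Mfin by (auto simp: top_unique)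
      have eq: "ball z r - E = ball z r - (E \<inter> ball z r)" by auto
      have "emeasure lebesgue (ball z r - (E \<inter> ball z r)) = ?M - ?m"
        by (rule emeasure_Diff) (use mfin E in auto)
      also have "\<dots> = 0" using ge Mfin by (rule diff_eq_0_ennreal[rotated])
      finally have "emeasure lebesgue (ball z r - E) = 0" by (simp only: eq)
      then have "z \<in> U1" unfolding U1_def using r(1) by blast
      then show ?thesis by blast
    qed
  qed
  have disj01: "U0 \<inter> U1 \<inter> ball x d = {}"
  proof (rule ccontr)
    assume "U0 \<inter> U1 \<inter> ball x d \<noteq> {}"
    then obtain z r0 r1 where r: "r0 > 0" "emeasure lebesgue (E \<inter> ball z r0) = 0"
      "r1 > 0" "emeasure lebesgue (ball z r1 - E) = 0" unfolding U0_def U1_def by auto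
    define r where "r = min r0 r1"
    have "ball z r \<subseteq> (E \<inter> ball z r0) \<union> (ball z r1 - E)" by (auto simp: r_def)
    then have "emeasure lebesgue (ball z r) \<le> emeasure lebesgue ((E \<inter> ball z r0) \<union> (ball z r1 - E))"
      using E by (intro emeasure_mono) auto
    also have "\<dots> \<le> emeasure lebesgue (E \<inter> ball z r0) + emeasure lebesgue (ball z r1 - E)"
      using E by (intro emeasure_subadditive) auto
    finally have "emeasure lebesgue (ball z r) \<le> 0" using r by simp
    moreover have "0 < emeasure lebesgue (ball z r)" using r by (intro ball_pos) (simp add: r_def)
    ultimately show False by simp
  qed
  have "U0 \<inter> ball x d = {} \<or> U1 \<inter> ball x d = {}"
    by (rule connectedD[OF connected_ball oU0 oU1 disj01 cover])
  moreover have "x \<notin> U0" using notV unfolding U0_def by auto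
  moreover have "x \<in> ball x d" using d by simp
  ultimately have sub: "ball x d \<subseteq> U1" using cover by blast
  have "(- E) \<inter> ball x d \<in> null_sets lebesgue"
  proof (rule locally_null)
    show "- E \<in> sets lebesgue" using sets.compl_sets[OF E] by (simp add: Compl_eq_Diff_UNIV)
    show "open (ball x d)" by simp
    fix z assume "z \<in> ball x d"
    then obtain r where "r > 0" "emeasure lebesgue (ball z r - E) = 0" using sub unfolding U1_def by auto
    moreover have "ball z r - E \<in> sets lebesgue" using E by auto
    ultimately show "\<exists>r>0. - E \<inter> ball z r \<in> null_sets lebesgue"
      by (intro exI[of _ r]) (auto simp: null_sets_def Diff_eq Int_commute)
  qed
  then show ?thesis by (simp add: Diff_eq Int_commute)
qed

lemma Ls_swap:
  fixes A B :: "'a::euclidean_space set"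
  assumes [measurable]: "A \<in> sets borel" "B \<in> sets borel"
  shows "Ls s A B = Ls s B A"
proof -
  define c where "c = - (real DIM('a) + s)"
  define g where "g x y = ennreal (norm (x - y) powr c) * indicator B y * indicator A x" for x y :: 'a
  have gm: "case_prod g \<in> borel_measurable (lborel \<Otimes>\<^sub>M lborel)" unfolding g_def by measurable
  have "Ls s A B = (\<integral>\<^sup>+ x. (\<integral>\<^sup>+ y. g x y \<partial>lborel) \<partial>lborel)"
    unfolding Ls_def nn_integral_completion g_def c_def
    by (intro nn_integral_cong nn_integral_multc[symmetric]) measurable
  also have "\<dots> = (\<integral>\<^sup>+ y. (\<integral>\<^sup>+ x. g x y \<partial>lborel) \<partial>lborel)"
    by (rule lborel_pair.Fubini'[OF gm, symmetric])
  also have "\<dots> = Ls s B A"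
    unfolding Ls_def nn_integral_completion
  proof (intro nn_integral_cong)
    fix y :: 'a
    have "(\<integral>\<^sup>+ x. g x y \<partial>lborel) = (\<integral>\<^sup>+ x. (ennreal (norm (y - x) powr c) * indicator A x) * indicator B y \<partial>lborel)"
      unfolding g_def by (intro nn_integral_cong) (simp only: norm_minus_commute[of y] mult_ac)
    also have "\<dots> = (\<integral>\<^sup>+ x. ennreal (norm (y - x) powr c) * indicator A x \<partial>lborel) * indicator B y"
      by (rule nn_integral_multc) measurable
    finally show "(\<integral>\<^sup>+ x. g x y \<partial>lborel) = (\<integral>\<^sup>+ x. ennreal (norm (y - x) powr (- (real DIM('a) + s))) * indicator A x \<partial>lborel) * indicator B y"
      by (simp add: c_def)
  qed
  finally show ?thesis .
qed

definition slab :: "'a::euclidean_space \<Rightarrow> real \<Rightarrow> 'a \<Rightarrow> ('a \<Rightarrow> real) \<Rightarrow> real \<Rightarrow> 'a set" where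
  "slab z r e \<gamma> h = {y \<in> ball z r. \<gamma> (y - (y \<bullet> e) *\<^sub>R e) < y \<bullet> e \<and> y \<bullet> e \<le> \<gamma> (y - (y \<bullet> e) *\<^sub>R e) + h}"

lemma proj_shift:
  fixes e x :: "'a::euclidean_space" assumes e: "norm e = 1"
  shows "(c *\<^sub>R e + x) \<bullet> e = c + x \<bullet> e"
    and "(c *\<^sub>R e + x) - ((c *\<^sub>R e + x) \<bullet> e) *\<^sub>R e = x - (x \<bullet> e) *\<^sub>R e"
proof -
  have ee: "e \<bullet> e = 1" using e by (simp add: power2_norm_eq_inner[symmetric])
  show 1: "(c *\<^sub>R e + x) \<bullet> e = c + x \<bullet> e" using ee by (simp add: inner_add_left)
  show "(c *\<^sub>R e + x) - ((c *\<^sub>R e + x) \<bullet> e) *\<^sub>R e = x - (x \<bullet> e) *\<^sub>R e"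
    unfolding 1 by (simp add: algebra_simps scaleR_add_left)
qed

lemma proj_in_H:
  fixes e x :: "'a::euclidean_space" assumes e: "norm e = 1"
  shows "(x - (x \<bullet> e) *\<^sub>R e) \<bullet> e = 0"
proof -
  have ee: "e \<bullet> e = 1" using e by (simp add: power2_norm_eq_inner[symmetric])
  then show ?thesis by (simp add: inner_diff_left)
qed

lemma cont_gamma_proj:
  fixes e :: "'a::euclidean_space" assumes e: "norm e = 1" and L: "L-lipschitz_on {w. w \<bullet> e = 0} \<gamma>"
  shows "continuous_on UNIV (\<lambda>y. \<gamma> (y - (y \<bullet> e) *\<^sub>R e))"
proof -
  have c1: "continuous_on UNIV (\<lambda>y::'a. y - (y \<bullet> e) *\<^sub>R e)" by (intro continuous_intros)
  have c2: "continuous_on {w. w \<bullet> e = 0} \<gamma>" using L by (rule lipschitz_on_continuous_on)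
  show ?thesis
    by (rule continuous_on_compose2[OF c2 c1]) (auto simp: proj_in_H[OF e])
qed

lemma slab_sets:
  fixes e :: "'a::euclidean_space" assumes e: "norm e = 1" and L: "L-lipschitz_on {w. w \<bullet> e = 0} \<gamma>"
  shows "slab z r e \<gamma> h \<in> sets lebesgue"
proof -
  let ?g = "\<lambda>y. \<gamma> (y - (y \<bullet> e) *\<^sub>R e)"
  have c: "continuous_on UNIV ?g" by (rule cont_gamma_proj[OF e L])
  have o: "open {y. ?g y < y \<bullet> e}"
    by (intro open_Collect_less c continuous_intros)
  have cl: "closed {y. y \<bullet> e \<le> ?g y + h}"
    by (intro closed_Collect_le c continuous_intros)
  have "slab z r e \<gamma> h = ball z r \<inter> {y. ?g y < y \<bullet> e} \<inter> {y. y \<bullet> e \<le> ?g y + h}"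
    by (auto simp: slab_def)
  moreover have "ball z r \<inter> {y. ?g y < y \<bullet> e} \<inter> {y. y \<bullet> e \<le> ?g y + h} \<in> sets borel"
    using o cl by (intro sets.Int borel_open borel_closed) auto
  ultimately show ?thesis by (simp add: sets_completionI_sets)
qed

lemma slab_bound:
  fixes z e :: "'a::euclidean_space"
  assumes e: "norm e = 1" and L: "L-lipschitz_on {w. w \<bullet> e = 0} \<gamma>" and h: "0 < h" "h \<le> 1/2"
  shows "emeasure lebesgue (slab z r e \<gamma> h) \<le> ennreal (2 * measure lebesgue (ball z (r+1)) * h)"
proof -
  define S where "S = slab z r e \<gamma> h"
  define P where "P y = y - (y \<bullet> e) *\<^sub>R e" for y
  define N where "N = nat \<lfloor>1/h\<rfloor>"
  define T where "T k = (+) ((real k * h) *\<^sub>R e) ` S" for k :: nat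
  define mS where "mS = measure lebesgue S"
  define mB where "mB = measure lebesgue (ball z (r+1))"
  have Ssets: "S \<in> sets lebesgue" unfolding S_def by (rule slab_sets[OF e L])
  have Sb: "bounded S" unfolding S_def slab_def by (rule bounded_subset[of "ball z r"]) auto
  have Sl: "S \<in> lmeasurable" using Ssets Sb by (intro bounded_set_imp_lmeasurable)
  have Tl: "T k \<in> lmeasurable" for k unfolding T_def using Sl by (rule measurable_translation)
  have TS: "emeasure lebesgue (T k) = ennreal mS" for k
  proof -
    have "emeasure lebesgue (T k) = ennreal (measure lebesgue (T k))"
      using Tl by (intro emeasure_eq_ennreal_measure fmeasurableD2)
    also have "measure lebesgue (T k) = mS" unfolding T_def mS_def by (rule measure_translation)
    finally show ?thesis .
  qed
  have memT: "real k * h < y \<bullet> e - \<gamma> (P y) \<and> y \<bullet> e - \<gamma> (P y) \<le> real k * h + h \<and> dist z y < r + real k * h"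
    if "y \<in> T k" for y k
  proof -
    from that obtain x where x: "x \<in> S" "y = (real k * h) *\<^sub>R e + x" unfolding T_def by auto
    have "y \<bullet> e = real k * h + x \<bullet> e" "P y = P x"
      using proj_shift[OF e, of "real k * h" x] x(2) by (auto simp: P_def)
    moreover have "\<gamma> (P x) < x \<bullet> e" "x \<bullet> e \<le> \<gamma> (P x) + h" "dist z x < r"
      using x(1) by (auto simp: S_def slab_def P_def)
    moreover have "dist z y \<le> dist z x + real k * h"
    proof -
      have "dist x y = real k * h" using x(2) e h by (simp add: dist_norm)
      then show ?thesis using dist_triangle[of z y x] by simp
    qed
    ultimately show ?thesis by auto
  qed
  have disj: "disjoint_family_on T {..<N}"
    unfolding disjoint_family_on_def
  proof (intro ballI impI)
    fix j k assume "j \<in> {..<N}" "k \<in> {..<N}" "j \<noteq> k"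
    show "T j \<inter> T k = {}"
    proof (rule ccontr)
      assume "T j \<inter> T k \<noteq> {}"
      then obtain y where "y \<in> T j" "y \<in> T k" by blast
      from memT[OF this(1)] memT[OF this(2)]
      have "real k * h < real j * h + h" "real j * h < real k * h + h" by linarith+
      then have "real k * h < (real j + 1) * h" "real j * h < (real k + 1) * h"
        by (simp_all add: distrib_right)
      then have "real k < real j + 1" "real j < real k + 1"
        using h(1) by (simp_all add: mult_less_cancel_right_pos)
      then show False using \<open>j \<noteq> k\<close> by linarith
    qed
  qed
  have fl: "0 \<le> \<lfloor>1/h\<rfloor>" using h by simp
  have RN: "real N = of_int \<lfloor>1/h\<rfloor>" unfolding N_def using fl by (simp only: of_nat_nat)
  have Nh: "real N * h \<le> 1"
  proof -
    have "real N \<le> 1/h" unfolding RN by (rule of_int_floor_le)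
    then show ?thesis using h by (simp add: field_simps)
  qed
  have N2: "1 / (2*h) \<le> real N"
  proof -
    have "1/h - 1 \<le> real N" unfolding RN
    proof -
      have "1/h < of_int \<lfloor>1/h\<rfloor> + 1" using floor_correct[of "1/h"] by simp
      then show "1/h - 1 \<le> of_int \<lfloor>1/h\<rfloor>" by linarith
    qed
    moreover have "1/(2*h) \<le> 1/h - 1" using h by (simp add: field_simps)
    ultimately show ?thesis by linarith
  qed
  have sub: "(\<Union>k\<in>{..<N}. T k) \<subseteq> ball z (r+1)"
  proof
    fix y assume "y \<in> (\<Union>k\<in>{..<N}. T k)"
    then obtain k where k: "k < N" "y \<in> T k" by auto
    have "real k * h < 1"
    proof -
      have "real k + 1 \<le> real N" using k(1) by linarith
      then have "(real k + 1) * h \<le> real N * h" using h by (intro mult_right_mono) auto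
      then show ?thesis using Nh h by (simp add: algebra_simps)
    qed
    then show "y \<in> ball z (r+1)" using memT[OF k(2)] by simp
  qed
  have "ennreal (real N * mS) = (\<Sum>k\<in>{..<N}. emeasure lebesgue (T k))"
    by (simp add: TS ennreal_of_nat_eq_real_of_nat[symmetric] ennreal_mult' mS_def)
  also have "\<dots> = emeasure lebesgue (\<Union>k\<in>{..<N}. T k)"
    using Tl disj by (intro sum_emeasure) auto
  also have "\<dots> \<le> emeasure lebesgue (ball z (r+1))"
    using sub by (intro emeasure_mono) auto
  also have "\<dots> = ennreal mB"
    unfolding mB_def using emeasure_lborel_ball_finite[of z "r+1"]
    by (intro emeasure_eq_ennreal_measure) simp
  finally have "real N * mS \<le> mB"
    by (subst (asm) ennreal_le_iff) (auto simp: mB_def)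
  moreover have "mS * (1 / (2*h)) \<le> mS * real N" using N2 by (intro mult_left_mono) (auto simp: mS_def)
  ultimately have "mS * (1 / (2*h)) \<le> mB" by (simp add: mult.commute)
  then have "mS \<le> 2 * mB * h" using h by (simp add: field_simps)
  moreover have "emeasure lebesgue S = ennreal mS"
    unfolding mS_def using Sl by (intro emeasure_eq_ennreal_measure fmeasurableD2)
  ultimately show ?thesis unfolding S_def[symmetric] mB_def[symmetric] by (simp add: ennreal_leI)
qed

lemma proj_norm_le:
  fixes e v :: "'a::euclidean_space" assumes e: "norm e = 1"
  shows "norm (v - (v \<bullet> e) *\<^sub>R e) \<le> norm v"
proof -
  have ee: "e \<bullet> e = 1" using e by (simp add: power2_norm_eq_inner[symmetric])
  have "(v - (v \<bullet> e) *\<^sub>R e) \<bullet> (v - (v \<bullet> e) *\<^sub>R e) = v \<bullet> v - (v \<bullet> e) * (v \<bullet> e)"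
    using ee by (simp add: inner_diff_left inner_diff_right inner_commute algebra_simps)
  also have "\<dots> \<le> v \<bullet> v" by simp
  finally show ?thesis by (simp add: norm_le)
qed

lemma tube_bound:
  fixes \<Omega> :: "'a::euclidean_space set"
  assumes op: "open \<Omega>" and bd: "bounded \<Omega>" and lb: "lipschitz_boundary \<Omega>"
  shows "\<exists>C r0. 0 \<le> C \<and> 0 < r0 \<and> (\<forall>\<rho>. 0 < \<rho> \<and> \<rho> \<le> r0 \<longrightarrow>
            emeasure lebesgue (nbhd_in (- \<Omega>) \<Omega> \<rho>) \<le> ennreal (C * \<rho>))"
proof -
  define Q where "Q x r e \<gamma> L \<longleftrightarrow> 0 < r \<and> norm e = 1 \<and> L-lipschitz_on {z. z \<bullet> e = 0} \<gamma> \<and>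
        \<Omega> \<inter> ball x r = {y \<in> ball x r. y \<bullet> e > \<gamma> (y - (y \<bullet> e) *\<^sub>R e)}"
    for x r and e :: 'a and \<gamma> :: "'a \<Rightarrow> real" and L :: real
  have "\<forall>x\<in>frontier \<Omega>. \<exists>r. \<exists>e \<gamma> L. Q x r e \<gamma> L"
    using lb unfolding lipschitz_boundary_def Q_def by blast
  from this obtain R where "\<forall>x\<in>frontier \<Omega>. \<exists>e \<gamma> L. Q x (R x) e \<gamma> L" by (metis bchoice)
  from this obtain ee where "\<forall>x\<in>frontier \<Omega>. \<exists>\<gamma> L. Q x (R x) (ee x) \<gamma> L" by (metis bchoice)
  from this obtain gg where "\<forall>x\<in>frontier \<Omega>. \<exists>L. Q x (R x) (ee x) (gg x) L" by (metis bchoice)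
  from this obtain LL where Qx: "\<forall>x\<in>frontier \<Omega>. Q x (R x) (ee x) (gg x) (LL x)" by (metis bchoice)
  have cf: "compact (frontier \<Omega>)" using bd by (rule compact_frontier_bounded)
  obtain F where F: "F \<subseteq> frontier \<Omega>" "finite F" "frontier \<Omega> \<subseteq> (\<Union>i\<in>F. ball i (R i / 2))"
    by (rule compactE_image[OF cf, of "frontier \<Omega>" "\<lambda>x. ball x (R x / 2)"])
       (use Qx Q_def in auto)
  have QF: "Q i (R i) (ee i) (gg i) (LL i)" if "i \<in> F" for i using Qx F that by blast
  have L0: "0 \<le> LL i" if "i \<in> F" for i
    using QF[OF that] unfolding Q_def by (auto intro: lipschitz_on_nonneg)
  define r0 where "r0 = Min (insert 1 ((\<lambda>i. min (R i / 2) (1 / (2 * (1 + LL i)))) ` F))"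
  define C where "C = (\<Sum>i\<in>F. 2 * measure lebesgue (ball i (R i + 1)) * (1 + LL i))"
  have pos: "0 < min (R i/2) (1/(2*(1+LL i)))" if "i \<in> F" for i
    using QF[OF that] L0[OF that] by (auto simp: Q_def)
  have r0pos: "0 < r0" unfolding r0_def using F(2) pos
    by (subst Min_gr_iff) auto
  have r0m: "r0 \<le> min (R i/2) (1/(2*(1+LL i)))" if "i \<in> F" for i
    unfolding r0_def using F(2) that by (intro Min_le) auto
  have r0le: "r0 \<le> R i / 2" "r0 \<le> 1 / (2 * (1 + LL i))" if "i \<in> F" for i
    using r0m[OF that] by auto
  have C0: "0 \<le> C" unfolding C_def using L0 by (intro sum_nonneg) auto
  have nonempty: "- \<Omega> \<noteq> {}"
  proof
    assume "- \<Omega> = {}"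
    then have "\<Omega> = UNIV" by auto
    then show False using bd not_bounded_UNIV by metis
  qed
  have cl: "closed (- \<Omega>)" using op by auto
  show ?thesis
  proof (intro exI conjI allI impI)
    fix \<rho> :: real assume \<rho>: "0 < \<rho> \<and> \<rho> \<le> r0"
    define S where "S i = slab i (R i) (ee i) (gg i) ((1 + LL i) * \<rho>)" for i
    have incl: "nbhd_in (- \<Omega>) \<Omega> \<rho> \<subseteq> (\<Union>i\<in>F. S i)"
    proof
      fix x assume "x \<in> nbhd_in (- \<Omega>) \<Omega> \<rho>"
      then have x: "x \<in> \<Omega>" "infdist x (- \<Omega>) \<le> \<rho>" by (auto simp: nbhd_in_def)
      obtain y where y: "y \<in> - \<Omega>" "infdist x (- \<Omega>) = dist x y"
        using infdist_attains_inf[OF cl nonempty] by blast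
      have "closed_segment x y \<inter> frontier \<Omega> \<noteq> {}"
        using x y by (intro connected_Int_frontier) auto
      then obtain w where w: "w \<in> closed_segment x y" "w \<in> frontier \<Omega>" by auto
      have "dist w x \<le> dist x y" using dist_in_closed_segment[OF w(1)] by blast
      moreover have "dist x w = dist w x" by (rule dist_commute)
      ultimately have dxw: "dist x w \<le> \<rho>" using x(2) y(2) by linarith
      obtain i where i: "i \<in> F" "w \<in> ball i (R i / 2)" using F(3) w(2) by auto
      have Qi: "Q i (R i) (ee i) (gg i) (LL i)" by (rule QF[OF i(1)])
      have e: "norm (ee i) = 1" and lip: "(LL i)-lipschitz_on {z. z \<bullet> ee i = 0} (gg i)"
        and eqn: "\<Omega> \<inter> ball i (R i) = {y \<in> ball i (R i). y \<bullet> ee i > gg i (y - (y \<bullet> ee i) *\<^sub>R ee i)}"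
        using Qi unfolding Q_def by auto
      have Li: "0 \<le> LL i" by (rule L0[OF i(1)])
      have diw: "dist i w < R i / 2" using i(2) by simp
      have xb: "x \<in> ball i (R i)"
      proof -
        have "dist i x \<le> dist i w + dist w x" by (rule dist_triangle)
        moreover have "\<rho> \<le> R i / 2" using \<rho> r0le(1)[OF i(1)] by linarith
        ultimately have "dist i x < R i" using diw dxw \<open>dist x w = dist w x\<close> by linarith
        then show ?thesis by simp
      qed
      have wb: "w \<in> ball i (R i)" using diw Qi by (auto simp: Q_def)
      have wO: "w \<notin> \<Omega>" using w(2) op by (simp add: frontier_def interior_open)
      let ?P = "\<lambda>y. y - (y \<bullet> ee i) *\<^sub>R ee i"
      have "x \<in> \<Omega> \<inter> ball i (R i)" using x(1) xb by blast
      then have "x \<in> {y \<in> ball i (R i). y \<bullet> ee i > gg i (?P y)}" by (simp only: eqn not_False_eq_True)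
      then have gx: "gg i (?P x) < x \<bullet> ee i" by simp
      have "w \<notin> \<Omega> \<inter> ball i (R i)" using wO by blast
      then have "w \<notin> {y \<in> ball i (R i). y \<bullet> ee i > gg i (?P y)}" by (simp only: eqn not_False_eq_True)
      then have "\<not> (gg i (?P w) < w \<bullet> ee i)" using wb by simp
      then have gw: "w \<bullet> ee i \<le> gg i (?P w)" by linarith
      have a1: "x \<bullet> ee i - w \<bullet> ee i \<le> dist x w"
      proof -
        have "\<bar>(x - w) \<bullet> ee i\<bar> \<le> norm (x - w) * norm (ee i)" by (rule Cauchy_Schwarz_ineq2)
        then have "\<bar>x \<bullet> ee i - w \<bullet> ee i\<bar> \<le> dist x w" using e by (simp add: dist_norm inner_diff_left)
        then show ?thesis by linarith
      qed
      have a2: "gg i (?P w) - gg i (?P x) \<le> LL i * dist x w"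
      proof -
        have d1: "dist (gg i (?P w)) (gg i (?P x)) \<le> LL i * dist (?P w) (?P x)"
          using lip by (rule lipschitz_onD) (auto simp: proj_in_H[OF e])
        have "?P w - ?P x = ?P (w - x)"
          by (simp add: inner_diff_left scaleR_diff_left algebra_simps)
        then have "dist (?P w) (?P x) = norm (?P (w - x))" by (simp only: dist_norm)
        also have "\<dots> \<le> norm (w - x)" by (rule proj_norm_le[OF e])
        also have "\<dots> = dist x w" by (simp only: dist_norm norm_minus_commute)
        finally have "LL i * dist (?P w) (?P x) \<le> LL i * dist x w" using Li by (rule mult_left_mono)
        with d1 have "\<bar>gg i (?P w) - gg i (?P x)\<bar> \<le> LL i * dist x w" by (simp only: dist_real_def)
        then show ?thesis by linarith
      qed
      have "x \<bullet> ee i \<le> gg i (?P x) + (1 + LL i) * \<rho>"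
      proof -
        have "LL i * dist x w \<le> LL i * \<rho>" using dxw Li by (rule mult_left_mono)
        moreover have "(1 + LL i) * \<rho> = \<rho> + LL i * \<rho>" by (simp add: distrib_right)
        ultimately show ?thesis using a1 a2 gw dxw by linarith
      qed
      then have "x \<in> S i" using xb gx by (simp add: S_def slab_def)
      then show "x \<in> (\<Union>i\<in>F. S i)" using i(1) by blast
    qed
    have Ssets: "S i \<in> sets lebesgue" if "i \<in> F" for i
      unfolding S_def using QF[OF that] by (intro slab_sets) (auto simp: Q_def)
    have "emeasure lebesgue (nbhd_in (- \<Omega>) \<Omega> \<rho>) \<le> emeasure lebesgue (\<Union>i\<in>F. S i)"
      using incl Ssets F(2) by (intro emeasure_mono) auto
    also have "\<dots> \<le> (\<Sum>i\<in>F. emeasure lebesgue (S i))"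
      using Ssets F(2) by (intro emeasure_subadditive_finite) auto
    also have "\<dots> \<le> (\<Sum>i\<in>F. ennreal (2 * measure lebesgue (ball i (R i + 1)) * ((1 + LL i) * \<rho>)))"
    proof (rule sum_mono)
      fix i assume i: "i \<in> F"
      have h1: "0 < (1 + LL i) * \<rho>" using L0[OF i] \<rho> by simp
      have "(1 + LL i) * \<rho> \<le> (1 + LL i) * (1 / (2 * (1 + LL i)))"
        using \<rho> r0le(2)[OF i] L0[OF i] by (intro mult_left_mono) auto
      also have "\<dots> = 1/2" using L0[OF i] by (simp add: field_simps)
      finally have h2: "(1 + LL i) * \<rho> \<le> 1/2" .
      show "emeasure lebesgue (S i) \<le> ennreal (2 * measure lebesgue (ball i (R i + 1)) * ((1 + LL i) * \<rho>))"
        unfolding S_def using QF[OF i] h1 h2 by (intro slab_bound) (auto simp: Q_def)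
    qed
    also have "\<dots> = ennreal (\<Sum>i\<in>F. 2 * measure lebesgue (ball i (R i + 1)) * ((1 + LL i) * \<rho>))"
      using L0 \<rho> by (intro sum_ennreal) auto
    also have "(\<Sum>i\<in>F. 2 * measure lebesgue (ball i (R i + 1)) * ((1 + LL i) * \<rho>)) = C * \<rho>"
      unfolding C_def by (simp add: sum_distrib_right mult.assoc)
    finally show "emeasure lebesgue (nbhd_in (- \<Omega>) \<Omega> \<rho>) \<le> ennreal (C * \<rho>)" .
  qed (use C0 r0pos in auto)
qed

lemma Ls_mono:
  assumes "A \<subseteq> A'" "B \<subseteq> B'"
  shows "Ls s A B \<le> Ls s A' B'"
  unfolding Ls_def
  by (intro nn_integral_mono mult_mono) (use assms in \<open>auto simp: indicator_def\<close>)

lemma open_null_pts: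
  fixes E :: "'a::euclidean_space set" assumes E: "E \<in> sets lebesgue"
  shows "open {z. \<exists>r>0. emeasure lebesgue (E \<inter> ball z r) = 0}"
proof -
  define U0 where "U0 = {z. \<exists>r>0. emeasure lebesgue (E \<inter> ball z r) = 0}"
  have "U0 = \<Union>{ball z r | z r. r > 0 \<and> emeasure lebesgue (E \<inter> ball z r) = 0}"
  proof (intro equalityI subsetI)
    fix w assume "w \<in> U0"
    then obtain r where "r > 0" "emeasure lebesgue (E \<inter> ball w r) = 0" unfolding U0_def by blast
    then show "w \<in> \<Union>{ball z r | z r. r > 0 \<and> emeasure lebesgue (E \<inter> ball z r) = 0}"
      by (intro UnionI[of "ball w r"]) auto
  next
    fix w assume "w \<in> \<Union>{ball z r | z r. r > 0 \<and> emeasure lebesgue (E \<inter> ball z r) = 0}"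
    then obtain z r where zr: "r > 0" "emeasure lebesgue (E \<inter> ball z r) = 0" "w \<in> ball z r" by auto
    have "ball w (r - dist z w) \<subseteq> ball z r" by (simp add: ball_subset_ball_iff dist_commute)
    then have "emeasure lebesgue (E \<inter> ball w (r - dist z w)) \<le> emeasure lebesgue (E \<inter> ball z r)"
      using E by (intro emeasure_mono) auto
    then show "w \<in> U0" unfolding U0_def using zr by (intro CollectI exI[of _ "r - dist z w"]) auto
  qed
  then have "open U0" by (simp only:) (intro open_Union, auto)
  then show ?thesis by (simp add: U0_def)
qed

lemma term_boundary:
  fixes \<Omega> :: "'a::euclidean_space set"
  assumes op: "open \<Omega>" and bd: "bounded \<Omega>" and s: "0 < s"
  shows "Ls s \<Omega> (- \<Omega>) \<le> (\<integral>\<^sup>+x. ennreal (kconst TYPE('a) s * infdist x (- \<Omega>) powr (-s)) * indicator \<Omega> x \<partial>lebesgue)"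
  unfolding Ls_def
proof (intro nn_integral_mono)
  fix x :: 'a
  show "(\<integral>\<^sup>+ y. ennreal (norm (x - y) powr (- (real DIM('a) + s))) * indicator (- \<Omega>) y \<partial>lebesgue) * indicator \<Omega> x
      \<le> ennreal (kconst TYPE('a) s * infdist x (- \<Omega>) powr (-s)) * indicator \<Omega> x"
  proof (cases "x \<in> \<Omega>")
    case False then show ?thesis by simp
  next
    case True
    have nonempty: "- \<Omega> \<noteq> {}"
    proof
      assume "- \<Omega> = {}"
      then have "\<Omega> = UNIV" by auto
      then show False using bd not_bounded_UNIV by metis
    qed
    have "0 < infdist x (- \<Omega>)"
      using op nonempty True by (intro infdist_pos_not_in_closed) auto
    then have "(\<integral>\<^sup>+ y. ennreal (norm (x - y) powr (- (real DIM('a) + s))) * indicator (- \<Omega>) y \<partial>lebesgue)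
        \<le> ennreal (kconst TYPE('a) s * infdist x (- \<Omega>) powr (-s))"
      using s by (intro kernel_bound AE_I2) (auto intro: infdist_le)
    then show ?thesis using True by simp
  qed
qed

theorem corollary3p5:
  fixes \<Omega> E :: "'a::euclidean_space set"
  assumes "open \<Omega>" and "bounded \<Omega>" and "lipschitz_boundary \<Omega>"
    and "E \<in> sets lebesgue"
    and "meas_boundary E \<inter> \<Omega> \<noteq> {}"
    and "ereal (real DIM('a) - 1) \<le> upper_mink_dim (meas_boundary E) \<Omega>"
    and "upper_mink_dim (meas_boundary E) \<Omega> < ereal (real DIM('a))"
  shows "\<forall>s. 0 < s \<and> ereal s < ereal (real DIM('a)) - upper_mink_dim (meas_boundary E) \<Omega>
             \<longrightarrow> Ps s E \<Omega> < \<infinity>"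
proof (intro allI impI)
  fix s :: real
  assume sA: "0 < s \<and> ereal s < ereal (real DIM('a)) - upper_mink_dim (meas_boundary E) \<Omega>"
  note op = assms(1) and bd = assms(2) and lb = assms(3) and Em = assms(4)
  define \<Gamma> where "\<Gamma> = meas_boundary E"
  define n where "n = real DIM('a)"
  define K where "K = kconst TYPE('a) s"
  have s: "0 < s" using sA by simp
  obtain d where D: "upper_mink_dim \<Gamma> \<Omega> = ereal d"
    using assms(6,7) unfolding \<Gamma>_def by (cases "upper_mink_dim (meas_boundary E) \<Omega>") auto
  have d1: "n - 1 \<le> d" using assms(6) D unfolding \<Gamma>_def n_def by simp
  have d2: "d < n" using assms(7) D unfolding \<Gamma>_def n_def by simp
  have sd: "s < n - d" using sA D unfolding \<Gamma>_def n_def by simp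
  have n1: "1 \<le> n" unfolding n_def using DIM_positive[where 'a='a] by linarith
  have s1: "s < 1" using d1 sd by linarith
  have K0: "0 \<le> K"
  proof -
    have "2 powr (-s) < 1" using s by (intro powr_less_one) auto
    then show ?thesis unfolding K_def kconst_def by (intro divide_nonneg_pos mult_nonneg_nonneg) auto
  qed
  have Om: "\<Omega> \<in> sets lebesgue" using op by measurable

  obtain C2 r2 where C2: "0 \<le> C2" "0 < r2"
    "\<And>\<rho>. 0 < \<rho> \<Longrightarrow> \<rho> \<le> r2 \<Longrightarrow> emeasure lebesgue (nbhd_in (- \<Omega>) \<Omega> \<rho>) \<le> ennreal (C2 * \<rho>)"
    using tube_bound[OF op bd lb] by blast
  have I2: "(\<integral>\<^sup>+x. ennreal (K * infdist x (- \<Omega>) powr (-s)) * indicator \<Omega> x \<partial>lebesgue) < \<infinity>"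
  proof -
    have C2': "emeasure lebesgue (nbhd_in (- \<Omega>) \<Omega> \<rho>) \<le> ennreal (C2 * \<rho> powr 1)"
      if "0 < \<rho>" "\<rho> \<le> r2" for \<rho>
    proof -
      have "\<rho> powr 1 = \<rho>" using that by simp
      then show ?thesis using C2(3)[OF that] by (simp only:)
    qed
    show ?thesis by (rule layer_bound[OF op bd s s1 C2(2) K0 C2(1) C2'])
  qed
  have LO: "Ls s \<Omega> (- \<Omega>) < \<infinity>"
    using term_boundary[OF op bd s] I2 unfolding K_def by (rule le_less_trans)
  have T2: "Ls s (E \<inter> \<Omega>) ((- E) - \<Omega>) < \<infinity>"
  proof -
    have "Ls s (E \<inter> \<Omega>) ((- E) - \<Omega>) \<le> Ls s \<Omega> (- \<Omega>)" by (rule Ls_mono) auto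
    then show ?thesis using LO by (rule le_less_trans)
  qed
  have "Ls s (- \<Omega>) \<Omega> = Ls s \<Omega> (- \<Omega>)"
    using op by (intro Ls_swap) (auto intro: borel_open borel_closed)
  then have T3: "Ls s (E - \<Omega>) ((- E) \<inter> \<Omega>) < \<infinity>"
  proof -
    have "Ls s (E - \<Omega>) ((- E) \<inter> \<Omega>) \<le> Ls s (- \<Omega>) \<Omega>" by (rule Ls_mono) auto
    then show ?thesis using LO \<open>Ls s (- \<Omega>) \<Omega> = Ls s \<Omega> (- \<Omega>)\<close> by simp
  qed

  define r where "r = (d + (n - s)) / 2"
  have r: "d < r" "r < n - s" "0 \<le> r" "r \<le> n" using d1 d2 sd s n1 by (auto simp: r_def)
  have cr: "upper_mink_content r \<Gamma> \<Omega> \<noteq> \<infinity>"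
  proof
    assume "upper_mink_content r \<Gamma> \<Omega> = \<infinity>"
    then have "ereal r \<in> ereal ` {r \<in> {0..real DIM('a)}. upper_mink_content r \<Gamma> \<Omega> = \<infinity>}"
      using r unfolding n_def by auto
    then have "ereal r \<le> upper_mink_dim \<Gamma> \<Omega>" unfolding upper_mink_dim_def by (rule Sup_upper)
    then show False using D r(1) by simp
  qed
  obtain M where M: "upper_mink_content r \<Gamma> \<Omega> < ereal M"
  proof (cases "upper_mink_content r \<Gamma> \<Omega>")
    case (real c) then show ?thesis using that[of "c+1"] by simp
  next
    case PInf then show ?thesis using cr by simp
  next
    case MInf then show ?thesis using that[of 0] by simp
  qed
  define a where "a = n - r"
  have a: "s < a" "0 < a" using r s by (auto simp: a_def)
  have "eventually (\<lambda>\<rho>. ereal (measure lebesgue (nbhd_in \<Gamma> \<Omega> \<rho>) / \<rho> powr a) < ereal M) (at_right 0)"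
    using Limsup_lessD[OF M[unfolded upper_mink_content_def]] unfolding a_def n_def .
  then obtain b where b: "0 < b" "\<And>\<rho>. 0 < \<rho> \<Longrightarrow> \<rho> < b \<Longrightarrow> measure lebesgue (nbhd_in \<Gamma> \<Omega> \<rho>) / \<rho> powr a < M"
    unfolding eventually_at_right_field by auto
  define \<rho>0 where "\<rho>0 = b / 2"
  have \<rho>0: "0 < \<rho>0" "\<rho>0 < b" using b by (auto simp: \<rho>0_def)
  have mb: "measure lebesgue (nbhd_in \<Gamma> \<Omega> \<rho>) \<le> M * \<rho> powr a" if "0 < \<rho>" "\<rho> < b" for \<rho>
  proof -
    have "measure lebesgue (nbhd_in \<Gamma> \<Omega> \<rho>) / \<rho> powr a < M" using b(2) that by blast
    moreover have "0 < \<rho> powr a" using that by simp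
    ultimately show ?thesis by (simp add: pos_divide_less_eq less_imp_le)
  qed
  have M0: "0 \<le> M"
  proof -
    have "0 \<le> measure lebesgue (nbhd_in \<Gamma> \<Omega> \<rho>0)" by simp
    then have "0 \<le> M * \<rho>0 powr a" using mb[OF \<rho>0] by linarith
    moreover have "0 < \<rho>0 powr a" using \<rho>0 by simp
    ultimately show ?thesis by (simp add: zero_le_mult_iff)
  qed
  have nbl: "nbhd_in \<Gamma> \<Omega> \<rho> \<in> lmeasurable" for \<rho>
    using op bd by (intro bounded_set_imp_lmeasurable nbhd_sets) (auto intro: bounded_subset simp: nbhd_in_def)
  have eb: "emeasure lebesgue (nbhd_in \<Gamma> \<Omega> \<rho>) \<le> ennreal (M * \<rho> powr a)" if "0 < \<rho>" "\<rho> \<le> \<rho>0" for \<rho>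
  proof -
    have "emeasure lebesgue (nbhd_in \<Gamma> \<Omega> \<rho>) = ennreal (measure lebesgue (nbhd_in \<Gamma> \<Omega> \<rho>))"
      using nbl by (intro emeasure_eq_ennreal_measure fmeasurableD2)
    then show ?thesis using mb[of \<rho>] that \<rho>0 by (simp add: ennreal_leI)
  qed
  have I1: "(\<integral>\<^sup>+x. ennreal (K * infdist x \<Gamma> powr (-s)) * indicator \<Omega> x \<partial>lebesgue) < \<infinity>"
    by (rule layer_bound[OF op bd s a(1) \<rho>0(1) K0 M0 eb])

  define N1 where "N1 = nbhd_in \<Gamma> \<Omega> 0"
  have N1null: "N1 \<in> null_sets lebesgue"
  proof -
    have "((\<lambda>\<rho>. M * \<rho> powr a) \<longlongrightarrow> M * 0) (at_right 0)"
    proof (intro tendsto_mult tendsto_const tendsto_zero_powrI)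
      show "((\<lambda>x. x) \<longlongrightarrow> (0::real)) (at_right 0)" by (rule tendsto_ident_at)
      show "\<forall>\<^sub>F x in at_right 0. 0 \<le> (x::real)"
        unfolding eventually_at_right_field by (intro exI[of _ 1]) auto
    qed (use a in auto)
    moreover have "\<forall>\<^sub>F \<rho> in at_right 0. measure lebesgue N1 \<le> M * \<rho> powr a"
      unfolding eventually_at_right_field
    proof (intro exI[of _ b] conjI allI impI)
      fix \<rho> :: real assume "0 < \<rho>" "\<rho> < b"
      have "N1 \<subseteq> nbhd_in \<Gamma> \<Omega> \<rho>" using \<open>0 < \<rho>\<close> by (auto simp: N1_def nbhd_in_def)
      then have "measure lebesgue N1 \<le> measure lebesgue (nbhd_in \<Gamma> \<Omega> \<rho>)"
        using nbl unfolding N1_def by (intro measure_mono_fmeasurable) auto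
      then show "measure lebesgue N1 \<le> M * \<rho> powr a" using mb[OF \<open>0 < \<rho>\<close> \<open>\<rho> < b\<close>] by linarith
    qed (use b in auto)
    ultimately have "measure lebesgue N1 \<le> M * 0"
      by (rule tendsto_le[OF trivial_limit_at_right_real _ tendsto_const])
    then have "measure lebesgue N1 = 0" using measure_nonneg[of lebesgue N1] by simp
    moreover have "emeasure lebesgue N1 = ennreal (measure lebesgue N1)"
      using nbl unfolding N1_def by (intro emeasure_eq_ennreal_measure fmeasurableD2)
    moreover have "N1 \<in> sets lebesgue" using nbl unfolding N1_def by auto
    ultimately show ?thesis by (simp add: null_sets_def)
  qed
  define V0 where "V0 = {z. \<exists>r>0. emeasure lebesgue (E \<inter> ball z r) = 0}"
  have N2null: "E \<inter> V0 \<in> null_sets lebesgue"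
  proof (rule locally_null[OF Em])
    show "open V0" unfolding V0_def using Em by (rule open_null_pts)
    fix z assume "z \<in> V0"
    then obtain r where "r > 0" "emeasure lebesgue (E \<inter> ball z r) = 0" unfolding V0_def by blast
    moreover have "E \<inter> ball z r \<in> sets lebesgue" using Em by auto
    ultimately show "\<exists>r>0. E \<inter> ball z r \<in> null_sets lebesgue" by (auto simp: null_sets_def)
  qed
  have AEgood: "AE x in lebesgue. x \<notin> N1 \<union> (E \<inter> V0)"
    using N1null N2null by (intro AE_I'[of "N1 \<union> (E \<inter> V0)"]) auto
  have "AE x in lebesgue.
      (\<integral>\<^sup>+ y. ennreal (norm (x - y) powr (- (real DIM('a) + s))) * indicator ((- E) \<inter> \<Omega>) y \<partial>lebesgue) * indicator (E \<inter> \<Omega>) x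
      \<le> ennreal (K * infdist x \<Gamma> powr (-s)) * indicator \<Omega> x"
    using AEgood
  proof eventually_elim
    case (elim x)
    show ?case
    proof (cases "x \<in> E \<inter> \<Omega>")
      case False then show ?thesis by simp
    next
      case True
      define \<delta> where "\<delta> = infdist x \<Gamma>"
      have "\<delta> \<noteq> 0" using elim True by (auto simp: N1_def nbhd_in_def \<delta>_def)
      then have \<delta>: "0 < \<delta>" using infdist_nonneg[of x \<Gamma>] unfolding \<delta>_def by linarith
      have notV: "emeasure lebesgue (E \<inter> ball x r) \<noteq> 0" if "r > 0" for r
        using elim True that unfolding V0_def by auto
      have disj: "ball x \<delta> \<inter> meas_boundary E = {}"
      proof (rule ccontr)
        assume "ball x \<delta> \<inter> meas_boundary E \<noteq> {}"
        then obtain y where "y \<in> ball x \<delta>" "y \<in> \<Gamma>" unfolding \<Gamma>_def by auto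
        then have "\<delta> \<le> dist x y" "dist x y < \<delta>" unfolding \<delta>_def
          by (simp_all add: infdist_le)
        then show False by linarith
      qed
      have Nb: "ball x \<delta> - E \<in> null_sets lebesgue"
        using Em \<delta> disj notV by (rule ball_dichotomy)
      have "AE y in lebesgue. y \<in> (- E) \<inter> \<Omega> \<longrightarrow> \<delta> \<le> dist x y"
        by (rule AE_I'[OF Nb]) (auto simp: not_le)
      then have "(\<integral>\<^sup>+ y. ennreal (norm (x - y) powr (- (real DIM('a) + s))) * indicator ((- E) \<inter> \<Omega>) y \<partial>lebesgue)
          \<le> ennreal (K * \<delta> powr (-s))"
        unfolding K_def using s \<delta> by (intro kernel_bound)
      then show ?thesis using True by (simp add: \<delta>_def)
    qed
  qed
  then have "Ls s (E \<inter> \<Omega>) ((- E) \<inter> \<Omega>) \<le> (\<integral>\<^sup>+x. ennreal (K * infdist x \<Gamma> powr (-s)) * indicator \<Omega> x \<partial>lebesgue)"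
    unfolding Ls_def by (rule nn_integral_mono_AE)
  then have T1: "Ls s (E \<inter> \<Omega>) ((- E) \<inter> \<Omega>) < \<infinity>" using I1 by (rule le_less_trans)
  show "Ps s E \<Omega> < \<infinity>" unfolding Ps_def using T1 T2 T3 by simp
qed

end
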